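(* Let $F$ be a set-system (not assumed uniform). The following are equivalent: (1) $F$ is an HKE set-system; (2) for every two non-empty disjoint subfamilies $\Gamma_1,\Gamma_2\subseteq F$, $$\Big|\bigcap\Gamma_1-\bigcup\Gamma_2\Big|=\Big|\bigcap\Gamma_2-\bigcup\Gamma_1\Big|;$$ (3) the equality in (2) holds for every two non-empty disjoint subfamilies $\Gamma_1,\Gamma_2\subseteq F$ with $\Gamma_1\cup\Gamma_2=F$.
   Context: A set-system is a family of sets; throughout, set-systems are non-empty finite families of finite non-empty sets. A set-system $F$ is a hereditary König–Egerváry (HKE) set-system if there is a positive integer $\alpha$ such that $|\bigcup\Gamma|+|\bigcap\Gamma|=2\alpha$ for every non-empty subfamily $\Gamma\subseteq F$. $X-Y$ denotes set difference. *)

theory Defs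
  imports Main
begin

definition set_system :: "'a set set \<Rightarrow> bool" where
  "set_system F \<longleftrightarrow> F \<noteq> {} \<and> finite F \<and> (\<forall>S\<in>F. finite S \<and> S \<noteq> {})"

definition HKE :: "'a set set \<Rightarrow> bool" where
  "HKE F \<longleftrightarrow> (\<exists>\<alpha>::nat. \<alpha> > 0 \<and>
     (\<forall>\<Gamma>. \<Gamma> \<noteq> {} \<and> \<Gamma> \<subseteq> F \<longrightarrow> card (\<Union>\<Gamma>) + card (\<Inter>\<Gamma>) = 2 * \<alpha>))"

end

theory Submission
  imports Defs
begin

definition tp :: "'a set set \<Rightarrow> 'a \<Rightarrow> 'a set set" where
  "tp F x = {S\<in>F. x\<in>S}"

definition nn :: "'a set set \<Rightarrow> 'a set set \<Rightarrow> nat" where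
  "nn F T = card {x\<in>\<Union>F. tp F x = T}"

lemma fiber_card:
  assumes "finite F" "\<forall>S\<in>F. finite S"
  shows "card {x\<in>\<Union>F. P (tp F x)} = (\<Sum>T\<in>{T. T\<subseteq>F \<and> P T}. nn F T)"
proof -
  have fin: "finite {T. T\<subseteq>F \<and> P T}"
    using assms(1) by (auto intro: rev_finite_subset[of "Pow F"])
  have eq: "{x\<in>\<Union>F. P (tp F x)} = (\<Union>T\<in>{T. T\<subseteq>F \<and> P T}. {x\<in>\<Union>F. tp F x = T})"
    by (auto simp: tp_def)
  have "card {x\<in>\<Union>F. P (tp F x)} = (\<Sum>T\<in>{T. T\<subseteq>F \<and> P T}. card {x\<in>\<Union>F. tp F x = T})"
    unfolding eq by (rule card_UN_disjoint) (use fin assms in auto)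
  thus ?thesis by (simp add: nn_def)
qed

lemma nn_empty:
  assumes "\<forall>S\<in>F. S \<noteq> {}"
  shows "nn F {} = 0"
proof -
  have "{x\<in>\<Union>F. tp F x = {}} = {}" by (auto simp: tp_def)
  thus ?thesis unfolding nn_def by (metis card.empty)
qed

lemma reindex_compl:
  assumes "finite F" "A \<subseteq> F" "B \<subseteq> F"
  shows "(\<Sum>T\<in>{T. T\<subseteq>F \<and> A\<subseteq>T \<and> T\<inter>B={}}. g (F - T))
       = (\<Sum>T\<in>{T. T\<subseteq>F \<and> B\<subseteq>T \<and> T\<inter>A={}}. g T)"
  by (rule sum.reindex_bij_witness[where i="\<lambda>T. F - T" and j="\<lambda>T. F - T"])
     (use assms in auto)

lemma mobius:
  fixes a b :: "'b set \<Rightarrow> nat"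
  assumes "finite F"
    and H: "\<forall>G. G \<noteq> {} \<and> G \<subseteq> F \<longrightarrow> (\<Sum>T\<in>{T. T\<subseteq>F \<and> G\<subseteq>T}. a T) = (\<Sum>T\<in>{T. T\<subseteq>F \<and> G\<subseteq>T}. b T)"
  shows "G \<noteq> {} \<Longrightarrow> G \<subseteq> F \<Longrightarrow> a G = b G"
proof (induction "card (F - G)" arbitrary: G rule: less_induct)
  case less
  let ?S = "{T. G\<subseteq>T \<and> T\<subseteq>F \<and> T \<noteq> G}"
  have fin: "finite ?S" using assms(1) by (auto intro: rev_finite_subset[of "Pow F"])
  have split: "{T. T\<subseteq>F \<and> G\<subseteq>T} = insert G ?S" using less.prems by auto
  have eqS: "(\<Sum>T\<in>?S. a T) = (\<Sum>T\<in>?S. b T)"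
  proof (rule sum.cong[OF refl])
    fix T assume T: "T \<in> ?S"
    have "card (F - T) < card (F - G)"
      using T assms(1) by (intro psubset_card_mono) auto
    thus "a T = b T" using less.hyps[of T] T less.prems by auto
  qed
  have "(\<Sum>T\<in>{T. T\<subseteq>F \<and> G\<subseteq>T}. a T) = (\<Sum>T\<in>{T. T\<subseteq>F \<and> G\<subseteq>T}. b T)"
    using H less.prems by auto
  hence "a G + (\<Sum>T\<in>?S. a T) = b G + (\<Sum>T\<in>?S. b T)"
    unfolding split using fin by (simp add: sum.insert)
  thus ?case using eqS by simp
qed

lemma inter_eq:
  assumes "G \<noteq> {}" "G \<subseteq> F"
  shows "\<Inter>G = {x\<in>\<Union>F. G \<subseteq> tp F x}"
  using assms by (auto simp: tp_def)

lemma diff_eq: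
  assumes "G \<noteq> {}" "G \<subseteq> F" "H \<subseteq> F"
  shows "\<Inter>G - \<Union>H = {x\<in>\<Union>F. G \<subseteq> tp F x \<and> tp F x \<inter> H = {}}"
  using assms by (auto simp: tp_def)

lemma compl_union_eq:
  assumes "G \<subseteq> F"
  shows "\<Union>F - \<Union>G = {x\<in>\<Union>F. tp F x \<inter> G = {}}"
  using assms by (auto simp: tp_def)

lemma nn_eq_diff:
  assumes "T \<noteq> {}" "T \<subseteq> F"
  shows "\<Inter>T - \<Union>(F - T) = {x\<in>\<Union>F. tp F x = T}"
  using assms by (auto simp: tp_def)

lemma card_inter:
  assumes "finite F" "\<forall>S\<in>F. finite S" "G \<noteq> {}" "G \<subseteq> F"
  shows "card (\<Inter>G) = (\<Sum>T\<in>{T. T\<subseteq>F \<and> G\<subseteq>T}. nn F T)"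
  unfolding inter_eq[OF assms(3,4)] by (rule fiber_card[OF assms(1,2)])

lemma card_compl:
  assumes "finite F" "\<forall>S\<in>F. finite S" "G \<subseteq> F"
  shows "card (\<Union>F - \<Union>G) = (\<Sum>T\<in>{T. T\<subseteq>F \<and> G\<subseteq>T}. nn F (F - T))"
proof -
  have "card (\<Union>F - \<Union>G) = (\<Sum>T\<in>{T. T\<subseteq>F \<and> T \<inter> G = {}}. nn F T)"
    unfolding compl_union_eq[OF assms(3)] by (rule fiber_card[OF assms(1,2)])
  also have "\<dots> = (\<Sum>T\<in>{T. T\<subseteq>F \<and> G\<subseteq>T}. nn F (F - T))"
    by (rule sum.reindex_bij_witness[where i="\<lambda>T. F - T" and j="\<lambda>T. F - T"])
       (use assms in \<open>auto simp: double_diff\<close>)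
  finally show ?thesis .
qed

definition bb :: "'a set set \<Rightarrow> 'a set set \<Rightarrow> nat" where
  "bb F T = (if T = F then nn F F else nn F (F - T))"

lemma sum_bb:
  assumes "finite F" "\<forall>S\<in>F. S \<noteq> {}" "G \<subseteq> F"
  shows "(\<Sum>T\<in>{T. T\<subseteq>F \<and> G\<subseteq>T}. bb F T) = nn F F + (\<Sum>T\<in>{T. T\<subseteq>F \<and> G\<subseteq>T}. nn F (F - T))"
proof -
  let ?U = "{T. T\<subseteq>F \<and> G\<subseteq>T}"
  have fin: "finite ?U" using assms(1) by (auto intro: rev_finite_subset[of "Pow F"])
  have F: "F \<in> ?U" using assms by auto
  have "(\<Sum>T\<in>?U. bb F T) = bb F F + (\<Sum>T\<in>?U - {F}. bb F T)"
    using sum.remove[OF fin F] by simp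
  also have "(\<Sum>T\<in>?U - {F}. bb F T) = (\<Sum>T\<in>?U - {F}. nn F (F - T))"
    by (rule sum.cong) (auto simp: bb_def)
  also have "(\<Sum>T\<in>?U. nn F (F - T)) = nn F (F - F) + (\<Sum>T\<in>?U - {F}. nn F (F - T))"
    using sum.remove[OF fin F, of "\<lambda>T. nn F (F - T)"] by simp
  ultimately show ?thesis using nn_empty[OF assms(2)] by (simp add: bb_def)
qed

lemma HKE_iff_sums:
  assumes "set_system F"
  shows "HKE F \<longleftrightarrow> (\<forall>G. G \<noteq> {} \<and> G \<subseteq> F \<longrightarrow>
     (\<Sum>T\<in>{T. T\<subseteq>F \<and> G\<subseteq>T}. nn F T) = (\<Sum>T\<in>{T. T\<subseteq>F \<and> G\<subseteq>T}. bb F T))"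
proof -
  have fF: "finite F" and fS: "\<forall>S\<in>F. finite S" and ne: "\<forall>S\<in>F. S \<noteq> {}" and Fne: "F \<noteq> {}"
    using assms by (auto simp: set_system_def)
  have fU: "finite (\<Union>F)" using fF fS by auto
  have interF: "card (\<Inter>F) = nn F F"
  proof -
    have "{T. T\<subseteq>F \<and> F\<subseteq>T} = {F}" by auto
    thus ?thesis using card_inter[OF fF fS Fne order_refl] by simp
  qed
  have key: "card (\<Union>G) + card (\<Inter>G) = card (\<Union>F) + card (\<Inter>F) \<longleftrightarrow>
     (\<Sum>T\<in>{T. T\<subseteq>F \<and> G\<subseteq>T}. nn F T) = (\<Sum>T\<in>{T. T\<subseteq>F \<and> G\<subseteq>T}. bb F T)"
    if G: "G \<noteq> {}" "G \<subseteq> F" for G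
  proof -
    have sub: "\<Union>G \<subseteq> \<Union>F" using G by auto
    have "card (\<Union>F) = card (\<Union>G) + card (\<Union>F - \<Union>G)"
      using card_Diff_subset[OF rev_finite_subset[OF fU sub] sub] card_mono[OF fU sub] by simp
    moreover note card_inter[OF fF fS G] card_compl[OF fF fS G(2)] sum_bb[OF fF ne G(2)] interF
    ultimately show ?thesis by linarith
  qed
  show ?thesis
  proof
    assume "HKE F"
    then obtain \<alpha> where a: "\<forall>\<Gamma>. \<Gamma> \<noteq> {} \<and> \<Gamma> \<subseteq> F \<longrightarrow> card (\<Union>\<Gamma>) + card (\<Inter>\<Gamma>) = 2 * \<alpha>"
      unfolding HKE_def by blast
    have "card (\<Union>F) + card (\<Inter>F) = 2 * \<alpha>" using a Fne by blast
    thus "\<forall>G. G \<noteq> {} \<and> G \<subseteq> F \<longrightarrow>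
     (\<Sum>T\<in>{T. T\<subseteq>F \<and> G\<subseteq>T}. nn F T) = (\<Sum>T\<in>{T. T\<subseteq>F \<and> G\<subseteq>T}. bb F T)"
    proof (intro allI impI)
      fix G assume G: "G \<noteq> {} \<and> G \<subseteq> F"
      have "card (\<Union>G) + card (\<Inter>G) = 2 * \<alpha>" using a G by blast
      with \<open>card (\<Union>F) + card (\<Inter>F) = 2 * \<alpha>\<close>
      have "card (\<Union>G) + card (\<Inter>G) = card (\<Union>F) + card (\<Inter>F)" by simp
      thus "(\<Sum>T\<in>{T. T\<subseteq>F \<and> G\<subseteq>T}. nn F T) = (\<Sum>T\<in>{T. T\<subseteq>F \<and> G\<subseteq>T}. bb F T)"
        using key G by blast
    qed
  next
    assume R: "\<forall>G. G \<noteq> {} \<and> G \<subseteq> F \<longrightarrow>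
     (\<Sum>T\<in>{T. T\<subseteq>F \<and> G\<subseteq>T}. nn F T) = (\<Sum>T\<in>{T. T\<subseteq>F \<and> G\<subseteq>T}. bb F T)"
    obtain S where S: "S \<in> F" using Fne by blast
    have c: "card (\<Union>G) + card (\<Inter>G) = card (\<Union>F) + card (\<Inter>F)" if "G \<noteq> {}" "G \<subseteq> F" for G
      using key[OF that] R that by blast
    have "card (\<Union>{S}) + card (\<Inter>{S}) = card (\<Union>F) + card (\<Inter>F)" using c[of "{S}"] S by blast
    hence cs: "card (\<Union>F) + card (\<Inter>F) = 2 * card S" by simp
    have "card S > 0" using S fS ne by auto
    thus "HKE F" unfolding HKE_def
    proof (intro exI[of _ "card S"] conjI allI impI)
      fix \<Gamma> :: "'a set set" assume "\<Gamma> \<noteq> {} \<and> \<Gamma> \<subseteq> F"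
      thus "card (\<Union>\<Gamma>) + card (\<Inter>\<Gamma>) = 2 * card S" using c cs by simp
    qed
  qed
qed


lemma HKE_iff_C3:
  assumes "set_system F"
  shows "HKE F \<longleftrightarrow> (\<forall>T. T \<noteq> {} \<and> T \<subseteq> F \<and> T \<noteq> F \<longrightarrow> nn F T = nn F (F - T))"
proof -
  have fF: "finite F" using assms by (auto simp: set_system_def)
  have "HKE F \<longleftrightarrow> (\<forall>G. G \<noteq> {} \<and> G \<subseteq> F \<longrightarrow> nn F G = bb F G)"
  proof
    assume "HKE F"
    hence H: "\<forall>G. G \<noteq> {} \<and> G \<subseteq> F \<longrightarrow>
     (\<Sum>T\<in>{T. T\<subseteq>F \<and> G\<subseteq>T}. nn F T) = (\<Sum>T\<in>{T. T\<subseteq>F \<and> G\<subseteq>T}. bb F T)"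
      using HKE_iff_sums[OF assms] by blast
    show "\<forall>G. G \<noteq> {} \<and> G \<subseteq> F \<longrightarrow> nn F G = bb F G"
      using mobius[OF fF H] by blast
  next
    assume H: "\<forall>G. G \<noteq> {} \<and> G \<subseteq> F \<longrightarrow> nn F G = bb F G"
    have "\<forall>G. G \<noteq> {} \<and> G \<subseteq> F \<longrightarrow>
     (\<Sum>T\<in>{T. T\<subseteq>F \<and> G\<subseteq>T}. nn F T) = (\<Sum>T\<in>{T. T\<subseteq>F \<and> G\<subseteq>T}. bb F T)"
    proof (intro allI impI)
      fix G :: "'a set set" assume "G \<noteq> {} \<and> G \<subseteq> F"
      hence G: "G \<noteq> {}" by blast
      show "(\<Sum>T\<in>{T. T\<subseteq>F \<and> G\<subseteq>T}. nn F T) = (\<Sum>T\<in>{T. T\<subseteq>F \<and> G\<subseteq>T}. bb F T)"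
      proof (rule sum.cong[OF refl])
        fix T assume "T \<in> {T. T\<subseteq>F \<and> G\<subseteq>T}"
        hence "T \<noteq> {} \<and> T \<subseteq> F" using G by auto
        thus "nn F T = bb F T" using H by blast
      qed
    qed
    thus "HKE F" using HKE_iff_sums[OF assms] by blast
  qed
  also have "\<dots> \<longleftrightarrow> (\<forall>T. T \<noteq> {} \<and> T \<subseteq> F \<and> T \<noteq> F \<longrightarrow> nn F T = nn F (F - T))"
    by (auto simp: bb_def)
  finally show ?thesis .
qed

lemma P3_iff_C3:
  shows "(\<forall>\<Gamma>1 \<Gamma>2. \<Gamma>1 \<noteq> {} \<and> \<Gamma>2 \<noteq> {} \<and> \<Gamma>1 \<subseteq> F \<and> \<Gamma>2 \<subseteq> F \<and> \<Gamma>1 \<inter> \<Gamma>2 = {}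
              \<and> \<Gamma>1 \<union> \<Gamma>2 = F \<longrightarrow>
              card (\<Inter>\<Gamma>1 - \<Union>\<Gamma>2) = card (\<Inter>\<Gamma>2 - \<Union>\<Gamma>1))
     \<longleftrightarrow> (\<forall>T. T \<noteq> {} \<and> T \<subseteq> F \<and> T \<noteq> F \<longrightarrow> nn F T = nn F (F - T))"
proof
  assume H: "\<forall>\<Gamma>1 \<Gamma>2. \<Gamma>1 \<noteq> {} \<and> \<Gamma>2 \<noteq> {} \<and> \<Gamma>1 \<subseteq> F \<and> \<Gamma>2 \<subseteq> F \<and> \<Gamma>1 \<inter> \<Gamma>2 = {}
              \<and> \<Gamma>1 \<union> \<Gamma>2 = F \<longrightarrow>
              card (\<Inter>\<Gamma>1 - \<Union>\<Gamma>2) = card (\<Inter>\<Gamma>2 - \<Union>\<Gamma>1)"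
  show "\<forall>T. T \<noteq> {} \<and> T \<subseteq> F \<and> T \<noteq> F \<longrightarrow> nn F T = nn F (F - T)"
  proof (intro allI impI)
    fix T assume T: "T \<noteq> {} \<and> T \<subseteq> F \<and> T \<noteq> F"
    have T2: "F - T \<noteq> {}" "F - T \<subseteq> F" using T by auto
    have FT: "F - (F - T) = T" using T by auto
    have "card (\<Inter>T - \<Union>(F - T)) = card (\<Inter>(F - T) - \<Union>T)"
      using H[rule_format, of T "F - T"] T by auto
    thus "nn F T = nn F (F - T)"
      using nn_eq_diff[of T F] nn_eq_diff[OF T2] T unfolding FT nn_def by simp
  qed
next
  assume C: "\<forall>T. T \<noteq> {} \<and> T \<subseteq> F \<and> T \<noteq> F \<longrightarrow> nn F T = nn F (F - T)"
  show "\<forall>\<Gamma>1 \<Gamma>2. \<Gamma>1 \<noteq> {} \<and> \<Gamma>2 \<noteq> {} \<and> \<Gamma>1 \<subseteq> F \<and> \<Gamma>2 \<subseteq> F \<and> \<Gamma>1 \<inter> \<Gamma>2 = {}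
              \<and> \<Gamma>1 \<union> \<Gamma>2 = F \<longrightarrow>
              card (\<Inter>\<Gamma>1 - \<Union>\<Gamma>2) = card (\<Inter>\<Gamma>2 - \<Union>\<Gamma>1)"
  proof (intro allI impI)
    fix G1 G2 :: "'a set set"
    assume G: "G1 \<noteq> {} \<and> G2 \<noteq> {} \<and> G1 \<subseteq> F \<and> G2 \<subseteq> F \<and> G1 \<inter> G2 = {} \<and> G1 \<union> G2 = F"
    hence e2: "G2 = F - G1" and e1: "G1 = F - G2" by auto
    have "card (\<Inter>G1 - \<Union>G2) = nn F G1"
      using nn_eq_diff[of G1 F] G unfolding nn_def by (simp add: e2)
    moreover have "card (\<Inter>G2 - \<Union>G1) = nn F G2"
      using nn_eq_diff[of G2 F] G unfolding nn_def by (metis e1)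
    moreover have "nn F G1 = nn F G2" using C G e2 by auto
    ultimately show "card (\<Inter>G1 - \<Union>G2) = card (\<Inter>G2 - \<Union>G1)" by simp
  qed
qed

lemma C3_imp_P2:
  assumes "set_system F"
    and C: "\<forall>T. T \<noteq> {} \<and> T \<subseteq> F \<and> T \<noteq> F \<longrightarrow> nn F T = nn F (F - T)"
  shows "\<forall>\<Gamma>1 \<Gamma>2. \<Gamma>1 \<noteq> {} \<and> \<Gamma>2 \<noteq> {} \<and> \<Gamma>1 \<subseteq> F \<and> \<Gamma>2 \<subseteq> F \<and> \<Gamma>1 \<inter> \<Gamma>2 = {} \<longrightarrow>
              card (\<Inter>\<Gamma>1 - \<Union>\<Gamma>2) = card (\<Inter>\<Gamma>2 - \<Union>\<Gamma>1)"
proof (intro allI impI)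
  have fF: "finite F" and fS: "\<forall>S\<in>F. finite S"
    using assms by (auto simp: set_system_def)
  fix G1 G2 :: "'a set set"
  assume G: "G1 \<noteq> {} \<and> G2 \<noteq> {} \<and> G1 \<subseteq> F \<and> G2 \<subseteq> F \<and> G1 \<inter> G2 = {}"
  have "card (\<Inter>G1 - \<Union>G2) = (\<Sum>T\<in>{T. T\<subseteq>F \<and> (G1\<subseteq>T \<and> T\<inter>G2={})}. nn F T)"
    using diff_eq[of G1 F G2] G fiber_card[OF fF fS, of "\<lambda>T. G1\<subseteq>T \<and> T\<inter>G2={}"] by auto
  also have "\<dots> = (\<Sum>T\<in>{T. T\<subseteq>F \<and> G1\<subseteq>T \<and> T\<inter>G2={}}. nn F (F - T))"
  proof (rule sum.cong)
    fix T assume T: "T \<in> {T. T\<subseteq>F \<and> (G1\<subseteq>T \<and> T\<inter>G2={})}"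
    have "T \<noteq> {}" using T G by auto
    moreover have "T \<noteq> F" using T G by auto
    ultimately show "nn F T = nn F (F - T)" using C T by auto
  qed simp
  also have "\<dots> = (\<Sum>T\<in>{T. T\<subseteq>F \<and> G2\<subseteq>T \<and> T\<inter>G1={}}. nn F T)"
    using reindex_compl[OF fF, of G1 G2 "nn F"] G by auto
  also have "\<dots> = card (\<Inter>G2 - \<Union>G1)"
    using diff_eq[of G2 F G1] G fiber_card[OF fF fS, of "\<lambda>T. G2\<subseteq>T \<and> T\<inter>G1={}"] by auto
  finally show "card (\<Inter>G1 - \<Union>G2) = card (\<Inter>G2 - \<Union>G1)" .
qed

theorem theorem2p5:
  fixes F :: "'a set set"
  assumes "set_system F"
  shows "(HKE F \<longleftrightarrow>
           (\<forall>\<Gamma>1 \<Gamma>2. \<Gamma>1 \<noteq> {} \<and> \<Gamma>2 \<noteq> {} \<and> \<Gamma>1 \<subseteq> F \<and> \<Gamma>2 \<subseteq> F \<and> \<Gamma>1 \<inter> \<Gamma>2 = {} \<longrightarrow>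
              card (\<Inter>\<Gamma>1 - \<Union>\<Gamma>2) = card (\<Inter>\<Gamma>2 - \<Union>\<Gamma>1)))
       \<and> (HKE F \<longleftrightarrow>
           (\<forall>\<Gamma>1 \<Gamma>2. \<Gamma>1 \<noteq> {} \<and> \<Gamma>2 \<noteq> {} \<and> \<Gamma>1 \<subseteq> F \<and> \<Gamma>2 \<subseteq> F \<and> \<Gamma>1 \<inter> \<Gamma>2 = {}
              \<and> \<Gamma>1 \<union> \<Gamma>2 = F \<longrightarrow>
              card (\<Inter>\<Gamma>1 - \<Union>\<Gamma>2) = card (\<Inter>\<Gamma>2 - \<Union>\<Gamma>1)))"
proof -
  note A = HKE_iff_C3[OF assms]
  note B = P3_iff_C3[of F]
  note D = C3_imp_P2[OF assms]
  show ?thesis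
  proof
    show "HKE F \<longleftrightarrow>
           (\<forall>\<Gamma>1 \<Gamma>2. \<Gamma>1 \<noteq> {} \<and> \<Gamma>2 \<noteq> {} \<and> \<Gamma>1 \<subseteq> F \<and> \<Gamma>2 \<subseteq> F \<and> \<Gamma>1 \<inter> \<Gamma>2 = {} \<longrightarrow>
              card (\<Inter>\<Gamma>1 - \<Union>\<Gamma>2) = card (\<Inter>\<Gamma>2 - \<Union>\<Gamma>1))"
    proof
      assume "HKE F" thus "\<forall>\<Gamma>1 \<Gamma>2. \<Gamma>1 \<noteq> {} \<and> \<Gamma>2 \<noteq> {} \<and> \<Gamma>1 \<subseteq> F \<and> \<Gamma>2 \<subseteq> F \<and> \<Gamma>1 \<inter> \<Gamma>2 = {} \<longrightarrow>
              card (\<Inter>\<Gamma>1 - \<Union>\<Gamma>2) = card (\<Inter>\<Gamma>2 - \<Union>\<Gamma>1)" using A D by blast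
    next
      assume P2: "\<forall>\<Gamma>1 \<Gamma>2. \<Gamma>1 \<noteq> {} \<and> \<Gamma>2 \<noteq> {} \<and> \<Gamma>1 \<subseteq> F \<and> \<Gamma>2 \<subseteq> F \<and> \<Gamma>1 \<inter> \<Gamma>2 = {} \<longrightarrow>
              card (\<Inter>\<Gamma>1 - \<Union>\<Gamma>2) = card (\<Inter>\<Gamma>2 - \<Union>\<Gamma>1)"
      hence "\<forall>\<Gamma>1 \<Gamma>2. \<Gamma>1 \<noteq> {} \<and> \<Gamma>2 \<noteq> {} \<and> \<Gamma>1 \<subseteq> F \<and> \<Gamma>2 \<subseteq> F \<and> \<Gamma>1 \<inter> \<Gamma>2 = {}
              \<and> \<Gamma>1 \<union> \<Gamma>2 = F \<longrightarrow>
              card (\<Inter>\<Gamma>1 - \<Union>\<Gamma>2) = card (\<Inter>\<Gamma>2 - \<Union>\<Gamma>1)" by blast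
      thus "HKE F" using A B by blast
    qed
  next
    show "HKE F \<longleftrightarrow>
           (\<forall>\<Gamma>1 \<Gamma>2. \<Gamma>1 \<noteq> {} \<and> \<Gamma>2 \<noteq> {} \<and> \<Gamma>1 \<subseteq> F \<and> \<Gamma>2 \<subseteq> F \<and> \<Gamma>1 \<inter> \<Gamma>2 = {}
              \<and> \<Gamma>1 \<union> \<Gamma>2 = F \<longrightarrow>
              card (\<Inter>\<Gamma>1 - \<Union>\<Gamma>2) = card (\<Inter>\<Gamma>2 - \<Union>\<Gamma>1))"
      using A B by blast
  qed
qed

end
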